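(* Let $n,m\ge1$, $t\ge1$, $\mathbf y\in\{0,1\}^n$ fixed training labels with $l^\star=\sum_iy_i$, $\Psi\in\mathbb R^{m\times n}$, thresholds $\tau_1,\dots,\tau_t\in\mathbb R$, and metrics $\mathrm{metric}^{(0)},\dots,\mathrm{metric}^{(t)}$, each of the form $$\mathrm{metric}^{(i)}(\hat{\mathbf y},\check{\mathbf y})=\sum_{j}\frac{a^{(i)}_j\mathrm{TP}+b^{(i)}_j\mathrm{TN}+f^{(i)}_j(\mathrm{PP},\mathrm{AP})}{g^{(i)}_j(\mathrm{PP},\mathrm{AP})}.$$ Then $$\max_{\theta\in\mathbb R^m}\ \min_{\mathcal Q}\ \max_{\mathcal P:\ \mathbb E_{\hat{\mathbf Y}\sim\mathcal P}[\mathrm{metric}^{(i)}(\hat{\mathbf Y},\mathbf y)]\ge\tau_i\ \forall i\in[1,t]}\ \mathbb E_{\hat{\mathbf Y}\sim\mathcal P,\check{\mathbf Y}\sim\mathcal Q}\Big[\mathrm{metric}^{(0)}(\hat{\mathbf Y},\check{\mathbf Y})-\theta^\top(\Psi\check{\mathbf Y}-\Psi\mathbf y)\Big]$$ ($\mathcal P,\mathcal Q$ probability distributions on $\{0,1\}^n$, $\hat{\mathbf Y},\check{\mathbf Y}$ independent) equals $$\max_{\theta}\Big\{\min_{\mathbf Q\in\Delta}\max_{\mathbf P\in\Delta\cap\Gamma}\Big[\sum_{k,l=0}^n\sum_j\frac{1}{g^{(0)}_j(k,l)}\Big\{a^{(0)}_j[\mathbf p_k^1\cdot\mathbf q_l^1]+b^{(0)}_j[\mathbf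 p_k^0\cdot\mathbf q_l^0]+f^{(0)}_j(k,l)r_ks_l\Big\}-\langle\mathbf Q^\top\mathbf 1,\Psi^\top\theta\rangle\Big]+\langle\mathbf y,\Psi^\top\theta\rangle\Big\},$$ where $$\Gamma=\Big\{\mathbf P:\ \sum_{k=0}^n\sum_j\frac{1}{g^{(i)}_j(k,l^\star)}\Big\{a^{(i)}_j[\mathbf p_k^1\cdot\mathbf y]+b^{(i)}_j[\mathbf p_k^0\cdot(\mathbf 1-\mathbf y)]+f^{(i)}_j(k,l^\star)r_k\Big\}\ge\tau_i\ \ \forall i\in[1,t]\Big\}.$$
   Context: For $\hat{\mathbf y},\check{\mathbf y}\in\{0,1\}^n$: $\mathrm{TP}=\sum\hat y_i\check y_i$, $\mathrm{TN}=\sum(1-\hat y_i)(1-\check y_i)$, $\mathrm{PP}=\sum\hat y_i$, $\mathrm{AP}=\sum\check y_i$; $a_j^{(i)},b_j^{(i)}\in\mathbb R$, $f_j^{(i)},g_j^{(i)}:\{0,\dots,n\}^2\to\mathbb R$ with $g_j^{(i)}$ never zero. The $i$-th column of $\Psi$ is the feature $\phi(x_i,1)\in\mathbb R^m$ of sample $i$ (with $\phi(x_i,0)=0$), so the feature of a label vector $\mathbf y$ is $\Psi\mathbf y$. $\Delta=\{\mathbf P\in\mathbb R^{n\times n}: p_{i,k}\ge0;\ p_{i,k}\le\frac1k\sum_jp_{j,k}\ \forall i,k\in[1,n];\ \sum_k\frac1k\sum_ip_{i,k}\le1\}$. From $\mathbf P$: $\mathbf p_k^1=\mathbf P_{(:,k)}$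 ($k\ge1$), $\mathbf p_0^1=\mathbf 0$; $r_k=\frac1k\mathbf 1^\top\mathbf p_k^1$ ($k\ge1$), $r_0=1-\sum_{k\ge1}r_k$; $\mathbf p_k^0=r_k\mathbf 1-\mathbf p_k^1$; likewise $\mathbf q_l^1,\mathbf q_l^0,s_l$ from $\mathbf Q$. *)

theory Defs
  imports Main "HOL-Library.Extended_Real"
begin

definition labels :: "nat \<Rightarrow> (nat \<Rightarrow> bool) set" where
  "labels n = {v. \<forall>i. n \<le> i \<longrightarrow> \<not> v i}"

definition TP :: "nat \<Rightarrow> (nat \<Rightarrow> bool) \<Rightarrow> (nat \<Rightarrow> bool) \<Rightarrow> real" where
  "TP n yh yc = (\<Sum>i<n. of_bool (yh i) * of_bool (yc i))"

definition TN :: "nat \<Rightarrow> (nat \<Rightarrow> bool) \<Rightarrow> (nat \<Rightarrow> bool) \<Rightarrow> real" where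
  "TN n yh yc = (\<Sum>i<n. (1 - of_bool (yh i)) * (1 - of_bool (yc i)))"

definition PP :: "nat \<Rightarrow> (nat \<Rightarrow> bool) \<Rightarrow> nat" where
  "PP n yh = (\<Sum>i<n. of_bool (yh i))"

definition AP :: "nat \<Rightarrow> (nat \<Rightarrow> bool) \<Rightarrow> nat" where
  "AP n yc = (\<Sum>i<n. of_bool (yc i))"

definition metric ::
  "(nat \<Rightarrow> nat \<Rightarrow> real) \<Rightarrow> (nat \<Rightarrow> nat \<Rightarrow> real) \<Rightarrow>
   (nat \<Rightarrow> nat \<Rightarrow> nat \<Rightarrow> nat \<Rightarrow> real) \<Rightarrow> (nat \<Rightarrow> nat \<Rightarrow> nat \<Rightarrow> nat \<Rightarrow> real) \<Rightarrow>
   (nat \<Rightarrow> nat) \<Rightarrow> nat \<Rightarrow> nat \<Rightarrow> (nat \<Rightarrow> bool) \<Rightarrow> (nat \<Rightarrow> bool) \<Rightarrow> real" where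
  "metric a b f g J n i yh yc =
     (\<Sum>j<J i. (a i j * TP n yh yc + b i j * TN n yh yc + f i j (PP n yh) (AP n yc))
               / g i j (PP n yh) (AP n yc))"

definition dists :: "nat \<Rightarrow> ((nat \<Rightarrow> bool) \<Rightarrow> real) set" where
  "dists n = {P. (\<forall>v\<in>labels n. 0 \<le> P v) \<and> (\<forall>v. v \<notin> labels n \<longrightarrow> P v = 0)
                 \<and> (\<Sum>v\<in>labels n. P v) = 1}"

definition Delta :: "nat \<Rightarrow> (nat \<Rightarrow> nat \<Rightarrow> real) set" where
  "Delta n = {P. (\<forall>i k. (n \<le> i \<or> k = 0 \<or> n < k) \<longrightarrow> P i k = 0)
     \<and> (\<forall>i<n. \<forall>k\<in>{1..n}. 0 \<le> P i k)
     \<and> (\<forall>i<n. \<forall>k\<in>{1..n}. P i k \<le> (1 / real k) * (\<Sum>j<n. P j k))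
     \<and> (\<Sum>k\<in>{1..n}. (1 / real k) * (\<Sum>i<n. P i k)) \<le> 1}"

definition p1 :: "(nat \<Rightarrow> nat \<Rightarrow> real) \<Rightarrow> nat \<Rightarrow> nat \<Rightarrow> real" where
  "p1 P k i = (if k = 0 then 0 else P i k)"

definition rr :: "nat \<Rightarrow> (nat \<Rightarrow> nat \<Rightarrow> real) \<Rightarrow> nat \<Rightarrow> real" where
  "rr n P k = (if k = 0 then 1 - (\<Sum>k'\<in>{1..n}. (1 / real k') * (\<Sum>i<n. P i k'))
               else (1 / real k) * (\<Sum>i<n. P i k))"

definition p0 :: "nat \<Rightarrow> (nat \<Rightarrow> nat \<Rightarrow> real) \<Rightarrow> nat \<Rightarrow> nat \<Rightarrow> real" where
  "p0 n P k i = rr n P k - p1 P k i"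

end

theory Submission
  imports Defs
begin


lemma labels_eq: "labels n = (\<lambda>S i. i \<in> S) ` Pow {..<n}"
proof
  show "labels n \<subseteq> (\<lambda>S i. i \<in> S) ` Pow {..<n}"
  proof
    fix v assume "v \<in> labels n"
    then have "v = (\<lambda>i. i \<in> {i. v i})" and "{i. v i} \<in> Pow {..<n}"
      by (auto simp: labels_def not_le[symmetric])
    then show "v \<in> (\<lambda>S i. i \<in> S) ` Pow {..<n}" by blast
  qed
qed (auto simp: labels_def)

lemma finite_labels[simp]: "finite (labels n)"
  by (simp add: labels_eq)

lemma PP_real: "real (PP n v) = (\<Sum>i<n. of_bool (v i))"
  by (simp add: PP_def)

lemma AP_PP: "AP n v = PP n v" by (simp add: AP_def PP_def)

lemma PP_le: "PP n v \<le> n"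
proof -
  have "PP n v \<le> (\<Sum>i<n. 1)" unfolding PP_def by (rule sum_mono) simp
  then show ?thesis by simp
qed

lemma zero_labels[simp]: "(\<lambda>_. False) \<in> labels n" by (simp add: labels_def)
lemma PP_zero[simp]: "PP n (\<lambda>_. False) = 0" by (simp add: PP_def)

lemma PP_pos: "s < n \<Longrightarrow> v s \<Longrightarrow> 1 \<le> PP n v"
proof -
  assume "s < n" "v s"
  then have "of_bool (v s) \<le> PP n v" unfolding PP_def
    by (intro member_le_sum) auto
  then show ?thesis using \<open>v s\<close> by simp
qed

definition w1 :: "nat \<Rightarrow> ((nat \<Rightarrow> bool) \<Rightarrow> real) \<Rightarrow> nat \<Rightarrow> nat \<Rightarrow> real" where
  "w1 n D k s = (\<Sum>v\<in>labels n. D v * of_bool (v s) * of_bool (PP n v = k))"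
definition w0 :: "nat \<Rightarrow> ((nat \<Rightarrow> bool) \<Rightarrow> real) \<Rightarrow> nat \<Rightarrow> nat \<Rightarrow> real" where
  "w0 n D k s = (\<Sum>v\<in>labels n. D v * (1 - of_bool (v s)) * of_bool (PP n v = k))"
definition rho :: "nat \<Rightarrow> ((nat \<Rightarrow> bool) \<Rightarrow> real) \<Rightarrow> nat \<Rightarrow> real" where
  "rho n D k = (\<Sum>v\<in>labels n. D v * of_bool (PP n v = k))"
definition Mg :: "nat \<Rightarrow> ((nat \<Rightarrow> bool) \<Rightarrow> real) \<Rightarrow> nat \<Rightarrow> nat \<Rightarrow> real" where
  "Mg n D i k = (if i < n \<and> 1 \<le> k \<and> k \<le> n then w1 n D k i else 0)"

lemma w0_eq: "w0 n D k s = rho n D k - w1 n D k s"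
  unfolding w0_def rho_def w1_def by (simp add: algebra_simps sum_subtractf)

lemma split_PP:
  fixes F :: "(nat \<Rightarrow> bool) \<Rightarrow> nat \<Rightarrow> real"
  shows "(\<Sum>v\<in>labels n. F v (PP n v)) = (\<Sum>k\<in>{0..n}. \<Sum>v\<in>labels n. of_bool (PP n v = k) * F v k)"
proof -
  have "(\<Sum>v\<in>labels n. F v (PP n v)) = (\<Sum>v\<in>labels n. \<Sum>k\<in>{0..n}. of_bool (PP n v = k) * F v k)"
  proof (rule sum.cong[OF refl])
    fix v
    have "(\<Sum>k\<in>{0..n}. of_bool (PP n v = k) * F v k) = (\<Sum>k\<in>{0..n}. if PP n v = k then F v k else 0)"
      by (rule sum.cong) auto
    also have "\<dots> = F v (PP n v)" using PP_le[of n v] by (simp add: sum.delta)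
    finally show "F v (PP n v) = (\<Sum>k\<in>{0..n}. of_bool (PP n v = k) * F v k)" by simp
  qed
  also have "\<dots> = (\<Sum>k\<in>{0..n}. \<Sum>v\<in>labels n. of_bool (PP n v = k) * F v k)"
    by (rule sum.swap)
  finally show ?thesis .
qed

lemma rho_sum: "D \<in> dists n \<Longrightarrow> (\<Sum>k\<in>{0..n}. rho n D k) = 1"
proof -
  assume "D \<in> dists n"
  have "(\<Sum>k\<in>{0..n}. rho n D k) = (\<Sum>v\<in>labels n. D v)"
    using split_PP[of "\<lambda>v k. D v" n] unfolding rho_def by (simp add: mult.commute)
  then show ?thesis using \<open>D \<in> dists n\<close> by (simp add: dists_def)
qed

lemma w1_sum: "(\<Sum>s<n. w1 n D k s) = real k * rho n D k"
proof -
  have "(\<Sum>s<n. w1 n D k s) = (\<Sum>v\<in>labels n. D v * of_bool (PP n v = k) * (\<Sum>s<n. of_bool (v s)))"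
    unfolding w1_def sum_distrib_left
    by (subst sum.swap) (simp add: mult_ac)
  also have "\<dots> = (\<Sum>v\<in>labels n. real k * (D v * of_bool (PP n v = k)))"
    by (rule sum.cong[OF refl]) (auto simp: PP_real[symmetric])
  also have "\<dots> = real k * rho n D k" unfolding rho_def sum_distrib_left ..
  finally show ?thesis .
qed

lemma w1_le: "D \<in> dists n \<Longrightarrow> w1 n D k s \<le> rho n D k"
  unfolding w1_def rho_def dists_def by (intro sum_mono) auto

lemma w1_nonneg: "D \<in> dists n \<Longrightarrow> 0 \<le> w1 n D k s"
  unfolding w1_def dists_def by (intro sum_nonneg) auto

lemma w1_zero: "s < n \<Longrightarrow> w1 n D 0 s = 0"
  unfolding w1_def using PP_pos[of s n] by (intro sum.neutral) force

lemma rho_zero_eq: "D \<in> dists n \<Longrightarrow> rho n D 0 = 1 - (\<Sum>k\<in>{1..n}. rho n D k)"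
proof -
  assume D: "D \<in> dists n"
  have "{0..n} = insert 0 {1..n}" by auto
  then show ?thesis using rho_sum[OF D] by simp
qed

lemma w1_sum_div: "1 \<le> k \<Longrightarrow> sum (w1 n D k) {..<n} / real k = rho n D k"
  by (simp add: w1_sum)

lemma Mg_colsum': "1 \<le> k \<Longrightarrow> k \<le> n \<Longrightarrow> (\<Sum>i<n. Mg n D i k) / real k = rho n D k"
  by (simp add: Mg_def w1_sum)

lemma Mg_colsum: "1 \<le> k \<Longrightarrow> k \<le> n \<Longrightarrow> (1 / real k) * (\<Sum>i<n. Mg n D i k) = rho n D k"
  by (simp add: Mg_def w1_sum)

lemma rr_Mg: "D \<in> dists n \<Longrightarrow> k \<le> n \<Longrightarrow> rr n (Mg n D) k = rho n D k"
proof -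
  assume D: "D \<in> dists n" and k: "k \<le> n"
  have "(\<Sum>k'\<in>{1..n}. (1 / real k') * (\<Sum>i<n. Mg n D i k')) = (\<Sum>k'\<in>{1..n}. rho n D k')"
    by (rule sum.cong[OF refl], rule Mg_colsum) auto
  then show ?thesis using k rho_zero_eq[OF D] by (auto simp: rr_def Mg_colsum')
qed

lemma p1_Mg: "s < n \<Longrightarrow> k \<le> n \<Longrightarrow> p1 (Mg n D) k s = w1 n D k s"
  by (auto simp: p1_def Mg_def w1_zero)

lemma p0_Mg: "D \<in> dists n \<Longrightarrow> s < n \<Longrightarrow> k \<le> n \<Longrightarrow> p0 n (Mg n D) k s = w0 n D k s"
  by (simp add: p0_def rr_Mg p1_Mg w0_eq)

lemma Mg_Delta: "D \<in> dists n \<Longrightarrow> Mg n D \<in> Delta n"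
proof -
  assume D: "D \<in> dists n"
  have "(\<Sum>k\<in>{1..n}. (1 / real k) * (\<Sum>i<n. Mg n D i k)) = (\<Sum>k\<in>{1..n}. rho n D k)"
    by (rule sum.cong[OF refl], rule Mg_colsum) auto
  also have "\<dots> = 1 - rho n D 0" using rho_zero_eq[OF D] by simp
  also have "\<dots> \<le> 1" using D unfolding rho_def dists_def by (auto intro!: sum_nonneg)
  finally have 1: "(\<Sum>k\<in>{1..n}. (1 / real k) * (\<Sum>i<n. Mg n D i k)) \<le> 1" .
  show ?thesis unfolding Delta_def
    using 1 w1_nonneg[OF D] w1_le[OF D] by (auto simp: Mg_def w1_sum_div)
qed

lemma lin3:
  fixes c T1 T2 :: "'x \<Rightarrow> real"
  shows "(\<Sum>v\<in>V. c v * (\<Sum>j\<in>S. (A j * T1 v + B j * T2 v + E j) / G j))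
    = (\<Sum>j\<in>S. (1 / G j) * (A j * (\<Sum>v\<in>V. c v * T1 v) + B j * (\<Sum>v\<in>V. c v * T2 v) + E j * (\<Sum>v\<in>V. c v)))"
proof -
  have "(\<Sum>v\<in>V. c v * (\<Sum>j\<in>S. (A j * T1 v + B j * T2 v + E j) / G j))
     = (\<Sum>j\<in>S. \<Sum>v\<in>V. c v * ((A j * T1 v + B j * T2 v + E j) / G j))"
    by (simp add: sum_distrib_left sum.swap[of _ S])
  also have "\<dots> = (\<Sum>j\<in>S. (1 / G j) * (A j * (\<Sum>v\<in>V. c v * T1 v) + B j * (\<Sum>v\<in>V. c v * T2 v) + E j * (\<Sum>v\<in>V. c v)))"
  proof (rule sum.cong[OF refl])
    fix j
    show "(\<Sum>v\<in>V. c v * ((A j * T1 v + B j * T2 v + E j) / G j)) =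
      (1 / G j) * (A j * (\<Sum>v\<in>V. c v * T1 v) + B j * (\<Sum>v\<in>V. c v * T2 v) + E j * (\<Sum>v\<in>V. c v))"
      by (simp add: sum_distrib_left sum_distrib_right sum.distrib algebra_simps divide_inverse)
  qed
  finally show ?thesis .
qed

lemma TP_lin:
  "(\<Sum>v\<in>V. c v * TP n v yc) = (\<Sum>s<n. (\<Sum>v\<in>V. c v * of_bool (v s)) * of_bool (yc s))"
  unfolding TP_def sum_distrib_left sum_distrib_right
  by (subst sum.swap) (simp add: mult_ac)

lemma TN_lin:
  "(\<Sum>v\<in>V. c v * TN n v yc) = (\<Sum>s<n. (\<Sum>v\<in>V. c v * (1 - of_bool (v s))) * (1 - of_bool (yc s)))"
  unfolding TN_def sum_distrib_left sum_distrib_right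
  by (subst sum.swap) (simp add: mult_ac)

lemma metric_lin:
  "(\<Sum>v\<in>labels n. D v * metric a b f g J n i v yc) =
   (\<Sum>k\<in>{0..n}. \<Sum>j<J i. (1 / g i j k (AP n yc)) *
      (a i j * (\<Sum>s<n. w1 n D k s * of_bool (yc s))
       + b i j * (\<Sum>s<n. w0 n D k s * (1 - of_bool (yc s)))
       + f i j k (AP n yc) * rho n D k))"
proof -
  define F where "F v k = D v * (\<Sum>j<J i. (a i j * TP n v yc + b i j * TN n v yc + f i j k (AP n yc)) / g i j k (AP n yc))" for v k
  have "(\<Sum>v\<in>labels n. D v * metric a b f g J n i v yc) = (\<Sum>v\<in>labels n. F v (PP n v))"
    by (simp add: F_def metric_def)
  also have "\<dots> = (\<Sum>k\<in>{0..n}. \<Sum>v\<in>labels n. of_bool (PP n v = k) * F v k)"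
    by (rule split_PP)
  also have "\<dots> = (\<Sum>k\<in>{0..n}. \<Sum>j<J i. (1 / g i j k (AP n yc)) *
      (a i j * (\<Sum>s<n. w1 n D k s * of_bool (yc s))
       + b i j * (\<Sum>s<n. w0 n D k s * (1 - of_bool (yc s)))
       + f i j k (AP n yc) * rho n D k))"
  proof (rule sum.cong[OF refl])
    fix k
    have "(\<Sum>v\<in>labels n. of_bool (PP n v = k) * F v k) =
       (\<Sum>v\<in>labels n. (D v * of_bool (PP n v = k)) * (\<Sum>j<J i. (a i j * TP n v yc + b i j * TN n v yc + f i j k (AP n yc)) / g i j k (AP n yc)))"
      by (simp add: F_def mult_ac)
    also have "\<dots> = (\<Sum>j<J i. (1 / g i j k (AP n yc)) *
      (a i j * (\<Sum>v\<in>labels n. (D v * of_bool (PP n v = k)) * TP n v yc)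
       + b i j * (\<Sum>v\<in>labels n. (D v * of_bool (PP n v = k)) * TN n v yc)
       + f i j k (AP n yc) * (\<Sum>v\<in>labels n. D v * of_bool (PP n v = k))))"
      by (rule lin3)
    also have "\<dots> = (\<Sum>j<J i. (1 / g i j k (AP n yc)) *
      (a i j * (\<Sum>s<n. w1 n D k s * of_bool (yc s))
       + b i j * (\<Sum>s<n. w0 n D k s * (1 - of_bool (yc s)))
       + f i j k (AP n yc) * rho n D k))"
      unfolding TP_lin TN_lin by (simp add: w1_def w0_def rho_def mult_ac)
    finally show "(\<Sum>v\<in>labels n. of_bool (PP n v = k) * F v k) = \<dots>" .
  qed
  finally show ?thesis .
qed

lemma lin3':
  fixes c :: "'x \<Rightarrow> real"
  shows "(\<Sum>v\<in>V. c v * (\<Sum>k\<in>K. \<Sum>j\<in>S. (1 / G k j) * (A j * T1 k v + B j * T2 k v + E k j)))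
    = (\<Sum>k\<in>K. \<Sum>j\<in>S. (1 / G k j) * (A j * (\<Sum>v\<in>V. c v * T1 k v) + B j * (\<Sum>v\<in>V. c v * T2 k v) + E k j * (\<Sum>v\<in>V. c v)))"
proof -
  have "(\<Sum>v\<in>V. c v * (\<Sum>k\<in>K. \<Sum>j\<in>S. (1 / G k j) * (A j * T1 k v + B j * T2 k v + E k j)))
     = (\<Sum>v\<in>V. \<Sum>k\<in>K. \<Sum>j\<in>S. c v * ((1 / G k j) * (A j * T1 k v + B j * T2 k v + E k j)))"
    by (simp add: sum_distrib_left)
  also have "\<dots> = (\<Sum>k\<in>K. \<Sum>v\<in>V. \<Sum>j\<in>S. c v * ((1 / G k j) * (A j * T1 k v + B j * T2 k v + E k j)))"
    by (rule sum.swap)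
  also have "\<dots> = (\<Sum>k\<in>K. \<Sum>j\<in>S. \<Sum>v\<in>V. c v * ((1 / G k j) * (A j * T1 k v + B j * T2 k v + E k j)))"
    by (rule sum.cong[OF refl], rule sum.swap)
  also have "\<dots> = (\<Sum>k\<in>K. \<Sum>j\<in>S. (1 / G k j) * (A j * (\<Sum>v\<in>V. c v * T1 k v) + B j * (\<Sum>v\<in>V. c v * T2 k v) + E k j * (\<Sum>v\<in>V. c v)))"
    by (simp add: sum_distrib_left sum_distrib_right sum.distrib algebra_simps)
  finally show ?thesis .
qed

lemma metric_bilin:
  "(\<Sum>yh\<in>labels n. \<Sum>yc\<in>labels n. P yh * Q yc * metric a b f g J n i yh yc) =
   (\<Sum>k\<in>{0..n}. \<Sum>l\<in>{0..n}. \<Sum>j<J i. (1 / g i j k l) *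
      (a i j * (\<Sum>s<n. w1 n P k s * w1 n Q l s)
       + b i j * (\<Sum>s<n. w0 n P k s * w0 n Q l s)
       + f i j k l * rho n P k * rho n Q l))"
proof -
  define R where "R yc l = (\<Sum>k\<in>{0..n}. \<Sum>j<J i. (1 / g i j k l) *
      (a i j * (\<Sum>s<n. w1 n P k s * of_bool (yc s))
       + b i j * (\<Sum>s<n. w0 n P k s * (1 - of_bool (yc s)))
       + f i j k l * rho n P k))" for yc l
  have "(\<Sum>yh\<in>labels n. \<Sum>yc\<in>labels n. P yh * Q yc * metric a b f g J n i yh yc)
     = (\<Sum>yc\<in>labels n. Q yc * (\<Sum>yh\<in>labels n. P yh * metric a b f g J n i yh yc))"
    by (subst sum.swap) (simp add: sum_distrib_left mult_ac)
  also have "\<dots> = (\<Sum>yc\<in>labels n. Q yc * R yc (PP n yc))"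
    by (simp add: metric_lin R_def AP_PP)
  also have "\<dots> = (\<Sum>l\<in>{0..n}. \<Sum>yc\<in>labels n. of_bool (PP n yc = l) * (Q yc * R yc l))"
    by (rule split_PP)
  also have "\<dots> = (\<Sum>l\<in>{0..n}. \<Sum>k\<in>{0..n}. \<Sum>j<J i. (1 / g i j k l) *
      (a i j * (\<Sum>s<n. w1 n P k s * w1 n Q l s)
       + b i j * (\<Sum>s<n. w0 n P k s * w0 n Q l s)
       + f i j k l * rho n P k * rho n Q l))"
  proof (rule sum.cong[OF refl])
    fix l
    have "(\<Sum>yc\<in>labels n. of_bool (PP n yc = l) * (Q yc * R yc l)) =
      (\<Sum>yc\<in>labels n. (Q yc * of_bool (PP n yc = l)) * R yc l)" by (simp add: mult_ac)
    also have "\<dots> = (\<Sum>k\<in>{0..n}. \<Sum>j<J i. (1 / g i j k l) *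
      (a i j * (\<Sum>yc\<in>labels n. (Q yc * of_bool (PP n yc = l)) * (\<Sum>s<n. w1 n P k s * of_bool (yc s)))
       + b i j * (\<Sum>yc\<in>labels n. (Q yc * of_bool (PP n yc = l)) * (\<Sum>s<n. w0 n P k s * (1 - of_bool (yc s))))
       + f i j k l * rho n P k * (\<Sum>yc\<in>labels n. Q yc * of_bool (PP n yc = l))))"
      unfolding R_def by (rule lin3')
    also have "\<dots> = (\<Sum>k\<in>{0..n}. \<Sum>j<J i. (1 / g i j k l) *
      (a i j * (\<Sum>s<n. w1 n P k s * w1 n Q l s)
       + b i j * (\<Sum>s<n. w0 n P k s * w0 n Q l s)
       + f i j k l * rho n P k * rho n Q l))"
    proof -
      have e1: "(\<Sum>yc\<in>labels n. (Q yc * of_bool (PP n yc = l)) * (\<Sum>s<n. w1 n P k s * of_bool (yc s)))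
        = (\<Sum>s<n. w1 n P k s * w1 n Q l s)" for k
        unfolding w1_def[of n Q] sum_distrib_left sum_distrib_right
        by (subst sum.swap) (simp add: mult_ac)
      have e0: "(\<Sum>yc\<in>labels n. (Q yc * of_bool (PP n yc = l)) * (\<Sum>s<n. w0 n P k s * (1 - of_bool (yc s))))
        = (\<Sum>s<n. w0 n P k s * w0 n Q l s)" for k
        unfolding w0_def[of n Q] sum_distrib_left sum_distrib_right
        by (subst sum.swap) (simp add: mult_ac)
      show ?thesis unfolding e1 e0 rho_def[of n Q l, symmetric] ..
    qed
    finally show "(\<Sum>yc\<in>labels n. of_bool (PP n yc = l) * (Q yc * R yc l)) = \<dots>" .
  qed
  also have "\<dots> = (\<Sum>k\<in>{0..n}. \<Sum>l\<in>{0..n}. \<Sum>j<J i. (1 / g i j k l) *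
      (a i j * (\<Sum>s<n. w1 n P k s * w1 n Q l s)
       + b i j * (\<Sum>s<n. w0 n P k s * w0 n Q l s)
       + f i j k l * rho n P k * rho n Q l))"
    by (rule sum.swap)
  finally show ?thesis .
qed



definition frac :: "nat \<Rightarrow> (nat \<Rightarrow> real) \<Rightarrow> nat set" where
  "frac n x = {i. i < n \<and> 0 < x i \<and> x i < 1}"

definition goodmu :: "nat \<Rightarrow> nat \<Rightarrow> (nat \<Rightarrow> real) \<Rightarrow> ((nat \<Rightarrow> bool) \<Rightarrow> real) \<Rightarrow> bool" where
  "goodmu n k x \<mu> \<longleftrightarrow> \<mu> \<in> dists n \<and> (\<forall>v\<in>labels n. PP n v \<noteq> k \<longrightarrow> \<mu> v = 0)
     \<and> (\<forall>i<n. (\<Sum>v\<in>labels n. \<mu> v * of_bool (v i)) = x i)"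

lemma hyper_base:
  assumes b: "\<forall>i<n. 0 \<le> x i \<and> x i \<le> 1" and s: "(\<Sum>i<n. x i) = real k"
    and f: "frac n x = {}"
  shows "\<exists>\<mu>. goodmu n k x \<mu>"
proof -
  have xi: "x i = of_bool (x i = 1)" if "i < n" for i
  proof -
    have "0 \<le> x i" "x i \<le> 1" using b that by auto
    moreover have "i \<notin> frac n x" using f by auto
    ultimately show ?thesis using that unfolding frac_def by (cases "x i = 1") auto
  qed
  define v0 where "v0 = (\<lambda>i. i < n \<and> x i = 1)"
  have v0L: "v0 \<in> labels n" by (simp add: labels_def v0_def)
  have "real (PP n v0) = (\<Sum>i<n. x i)"
    unfolding PP_real
  proof (rule sum.cong[OF refl])
    fix i assume "i \<in> {..<n}"
    then show "of_bool (v0 i) = x i" using xi[of i] by (cases "x i = 1") (auto simp: v0_def)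
  qed
  then have pp: "PP n v0 = k" using s by simp
  define \<mu> where "\<mu> = (\<lambda>v. of_bool (v = v0) :: real)"
  have "\<mu> \<in> dists n" unfolding dists_def \<mu>_def using v0L by auto
  moreover have "\<forall>v\<in>labels n. PP n v \<noteq> k \<longrightarrow> \<mu> v = 0" using pp by (auto simp: \<mu>_def)
  moreover have "(\<Sum>v\<in>labels n. \<mu> v * of_bool (v i)) = x i" if "i < n" for i
  proof -
    have "(\<Sum>v\<in>labels n. \<mu> v * of_bool (v i)) = (\<Sum>v\<in>labels n. if v = v0 then of_bool (v0 i) else 0)"
      by (rule sum.cong) (auto simp: \<mu>_def)
    also have "\<dots> = of_bool (v0 i)" using v0L by (simp add: sum.delta')
    also have "\<dots> = x i" using xi[OF that] that by (simp add: v0_def)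
    finally show ?thesis .
  qed
  ultimately show ?thesis unfolding goodmu_def by blast
qed

lemma two_frac:
  assumes b: "\<forall>i<n. 0 \<le> x i \<and> x i \<le> 1" and s: "(\<Sum>i<n. x i) = real k"
    and i0: "i0 \<in> frac n x"
  shows "\<exists>j0\<in>frac n x. j0 \<noteq> i0"
proof (rule ccontr)
  assume na: "\<not> ?thesis"
  then have xi: "x i = of_bool (x i = 1)" if "i < n" "i \<noteq> i0" for i
  proof -
    have "0 \<le> x i" "x i \<le> 1" using b that by auto
    moreover have "i \<notin> frac n x" using na that by auto
    ultimately show ?thesis using that unfolding frac_def by (cases "x i = 1") auto
  qed
  have i0n: "i0 < n" and fi0: "0 < x i0" "x i0 < 1" using i0 by (auto simp: frac_def)
  have "(\<Sum>i<n. x i) = x i0 + (\<Sum>i\<in>{..<n}-{i0}. x i)"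
    using i0n by (simp add: sum.remove)
  also have "(\<Sum>i\<in>{..<n}-{i0}. x i) = (\<Sum>i\<in>{..<n}-{i0}. real (of_bool (x i = 1)))"
  proof (rule sum.cong[OF refl])
    fix i assume "i \<in> {..<n}-{i0}"
    then show "x i = real (of_bool (x i = 1))" using xi[of i] by auto
  qed
  also have "\<dots> = real (\<Sum>i\<in>{..<n}-{i0}. of_bool (x i = 1))" by simp
  finally have "x i0 = real k - real (\<Sum>i\<in>{..<n}-{i0}. of_bool (x i = 1) :: nat)" using s by simp
  then show False using fi0
    by (cases "k \<le> (\<Sum>i\<in>{..<n}-{i0}. of_bool (x i = 1) :: nat)") (auto simp: of_nat_diff[symmetric])
qed

lemma mix_good:
  assumes gp: "goodmu n k xp \<mu>p" and gm: "goodmu n k xm \<mu>m"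
    and l: "0 \<le> l" "l \<le> 1"
    and x: "\<And>i. i < n \<Longrightarrow> x i = l * xp i + (1 - l) * xm i"
  shows "goodmu n k x (\<lambda>v. l * \<mu>p v + (1 - l) * \<mu>m v)"
proof -
  have dp: "\<mu>p \<in> dists n" and dm: "\<mu>m \<in> dists n" using gp gm by (auto simp: goodmu_def)
  have "(\<lambda>v. l * \<mu>p v + (1 - l) * \<mu>m v) \<in> dists n"
    using dp dm l unfolding dists_def by (auto simp: sum.distrib sum_distrib_left[symmetric])
  moreover have "\<forall>v\<in>labels n. PP n v \<noteq> k \<longrightarrow> l * \<mu>p v + (1 - l) * \<mu>m v = 0"
    using gp gm by (auto simp: goodmu_def)
  moreover have "(\<Sum>v\<in>labels n. (l * \<mu>p v + (1 - l) * \<mu>m v) * of_bool (v i)) = x i" if "i < n" for i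
  proof -
    have "(\<Sum>v\<in>labels n. (l * \<mu>p v + (1 - l) * \<mu>m v) * of_bool (v i))
      = l * (\<Sum>v\<in>labels n. \<mu>p v * of_bool (v i)) + (1 - l) * (\<Sum>v\<in>labels n. \<mu>m v * of_bool (v i))"
    proof -
      have "(\<Sum>v\<in>labels n. (l * \<mu>p v + (1 - l) * \<mu>m v) * of_bool (v i))
        = (\<Sum>v\<in>labels n. l * (\<mu>p v * of_bool (v i)) + (1 - l) * (\<mu>m v * of_bool (v i)))"
        by (rule sum.cong) (simp_all add: algebra_simps)
      then show ?thesis by (simp only: sum.distrib sum_distrib_left)
    qed
    also have "\<dots> = x i" using gp gm that x[OF that] by (simp add: goodmu_def)
    finally show ?thesis .
  qed
  ultimately show ?thesis unfolding goodmu_def by blast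
qed

lemma hyper_aux:
  "card (frac n x) = N \<Longrightarrow> (\<forall>i<n. 0 \<le> x i \<and> x i \<le> 1) \<Longrightarrow> (\<Sum>i<n. x i) = real k
    \<Longrightarrow> \<exists>\<mu>. goodmu n k x \<mu>"
proof (induction N arbitrary: x rule: less_induct)
  case (less N)
  have finF: "finite (frac n x)" by (simp add: frac_def)
  show ?case
  proof (cases "frac n x = {}")
    case True then show ?thesis using hyper_base less.prems by blast
  next
    case False
    then obtain i0 where i0: "i0 \<in> frac n x" by blast
    obtain j0 where j0: "j0 \<in> frac n x" "j0 \<noteq> i0" using two_frac[OF less.prems(2,3) i0] by blast
    have i0n: "i0 < n" and fi0: "0 < x i0" "x i0 < 1" using i0 by (auto simp: frac_def)
    have j0n: "j0 < n" and fj0: "0 < x j0" "x j0 < 1" using j0 by (auto simp: frac_def)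
    define d where "d i = (of_bool (i = i0) - of_bool (i = j0) :: real)" for i
    define \<alpha> where "\<alpha> = min (1 - x i0) (x j0)"
    define \<beta> where "\<beta> = min (x i0) (1 - x j0)"
    have ap: "0 < \<alpha>" and bp: "0 < \<beta>" using fi0 fj0 by (auto simp: \<alpha>_def \<beta>_def)
    define xp where "xp i = x i + \<alpha> * d i" for i
    define xm where "xm i = x i - \<beta> * d i" for i
    have dsum: "(\<Sum>i<n. d i) = 0"
      using i0n j0n by (simp add: d_def sum_subtractf)
    have sp: "(\<Sum>i<n. xp i) = real k" using less.prems(3) dsum
      by (simp add: xp_def sum.distrib sum_distrib_left[symmetric])
    have sm: "(\<Sum>i<n. xm i) = real k" using less.prems(3) dsum
      by (simp add: xm_def sum_subtractf sum_distrib_left[symmetric])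
    have bp': "\<forall>i<n. 0 \<le> xp i \<and> xp i \<le> 1"
      using less.prems(2) j0(2) fi0 fj0 unfolding xp_def d_def \<alpha>_def by (auto simp: min_def)
    have bm': "\<forall>i<n. 0 \<le> xm i \<and> xm i \<le> 1"
      using less.prems(2) j0(2) fi0 fj0 unfolding xm_def d_def \<beta>_def by (auto simp: min_def)
    have others: "i \<noteq> i0 \<Longrightarrow> i \<noteq> j0 \<Longrightarrow> xp i = x i \<and> xm i = x i" for i
      by (simp add: xp_def xm_def d_def)
    have subp: "frac n xp \<subset> frac n x"
    proof
      show "frac n xp \<subseteq> frac n x"
      proof
        fix i assume "i \<in> frac n xp"
        then show "i \<in> frac n x" using others[of i] i0 j0 by (cases "i = i0 \<or> i = j0") (auto simp: frac_def)
      qed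
      have "i0 \<notin> frac n xp \<or> j0 \<notin> frac n xp"
        using j0(2) by (auto simp: frac_def xp_def d_def \<alpha>_def min_def split: if_splits)
      then show "frac n xp \<noteq> frac n x" using i0 j0 by auto
    qed
    have subm: "frac n xm \<subset> frac n x"
    proof
      show "frac n xm \<subseteq> frac n x"
      proof
        fix i assume "i \<in> frac n xm"
        then show "i \<in> frac n x" using others[of i] i0 j0 by (cases "i = i0 \<or> i = j0") (auto simp: frac_def)
      qed
      have "i0 \<notin> frac n xm \<or> j0 \<notin> frac n xm"
        using j0(2) by (auto simp: frac_def xm_def d_def \<beta>_def min_def split: if_splits)
      then show "frac n xm \<noteq> frac n x" using i0 j0 by auto
    qed
    obtain \<mu>p where gp: "goodmu n k xp \<mu>p"
      using less.IH[OF _ refl bp' sp] psubset_card_mono[OF finF subp] less.prems(1) by blast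
    obtain \<mu>m where gm: "goodmu n k xm \<mu>m"
      using less.IH[OF _ refl bm' sm] psubset_card_mono[OF finF subm] less.prems(1) by blast
    define l where "l = \<beta> / (\<alpha> + \<beta>)"
    have l: "0 \<le> l" "l \<le> 1" using ap bp by (auto simp: l_def)
    have "x i = l * xp i + (1 - l) * xm i" for i
    proof -
      have e: "l * \<alpha> = (1 - l) * \<beta>" using ap bp by (simp add: l_def field_simps)
      have "l * xp i + (1 - l) * xm i = x i + (l * \<alpha> - (1 - l) * \<beta>) * d i"
        by (simp add: xp_def xm_def algebra_simps)
      then show ?thesis using e by simp
    qed
    then show ?thesis using mix_good[OF gp gm l] by blast
  qed
qed

lemma hyper:
  "(\<forall>i<n. 0 \<le> x i \<and> x i \<le> 1) \<Longrightarrow> (\<Sum>i<n. x i) = real k \<Longrightarrow> \<exists>\<mu>. goodmu n k x \<mu>"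
  using hyper_aux by blast



lemma Mg_surj:
  assumes P: "P \<in> Delta n"
  shows "\<exists>D\<in>dists n. Mg n D = P"
proof -
  define R where "R k = (1 / real k) * (\<Sum>i<n. P i k)" for k
  have P0: "\<And>i k. (n \<le> i \<or> k = 0 \<or> n < k) \<Longrightarrow> P i k = 0"
    and Pnn: "\<And>i k. i < n \<Longrightarrow> k \<in> {1..n} \<Longrightarrow> 0 \<le> P i k"
    and Ple: "\<And>i k. i < n \<Longrightarrow> k \<in> {1..n} \<Longrightarrow> P i k \<le> R k"
    and Rs: "(\<Sum>k\<in>{1..n}. R k) \<le> 1"
    using P unfolding Delta_def R_def by auto
  have Rnn: "0 \<le> R k" if "k \<in> {1..n}" for k
  proof -
    have "0 \<le> (\<Sum>i<n. P i k)" using Pnn[OF _ that] by (auto intro!: sum_nonneg)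
    then show ?thesis unfolding R_def by simp
  qed
  define r0 where "r0 = 1 - (\<Sum>k\<in>{1..n}. R k)"
  have r0: "0 \<le> r0" using Rs by (simp add: r0_def)
  define x where "x k i = P i k / R k" for k i
  define \<mu> where "\<mu> k = (SOME \<mu>. goodmu n k (x k) \<mu>)" for k
  have good: "goodmu n k (x k) (\<mu> k)" if k: "k \<in> {1..n}" and Rp: "R k \<noteq> 0" for k
  proof -
    have Rp': "0 < R k" using Rnn[OF k] Rp by simp
    have "\<forall>i<n. 0 \<le> x k i \<and> x k i \<le> 1"
      using Pnn[OF _ k] Ple[OF _ k] Rp' by (auto simp: x_def)
    moreover have "(\<Sum>i<n. x k i) = real k"
    proof -
      have "(\<Sum>i<n. x k i) = (\<Sum>i<n. P i k) / R k" by (simp add: x_def sum_divide_distrib)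
      also have "(\<Sum>i<n. P i k) = real k * R k" using k by (simp add: R_def)
      finally show ?thesis using Rp by simp
    qed
    ultimately obtain m where "goodmu n k (x k) m" using hyper by blast
    then show ?thesis unfolding \<mu>_def using someI[of "goodmu n k (x k)" m] by simp
  qed
  define z where "z = (\<lambda>_::nat. False)"
  define D where "D v = r0 * of_bool (v = z) + (\<Sum>k\<in>{1..n}. R k * \<mu> k v)" for v
  have term_nn: "0 \<le> R k * \<mu> k v" if "k \<in> {1..n}" "v \<in> labels n" for k v
  proof (cases "R k = 0")
    case False then show ?thesis using good[OF that(1) False] that Rnn[OF that(1)]
      by (auto simp: goodmu_def dists_def)
  qed simp
  have term_out: "R k * \<mu> k v = 0" if "k \<in> {1..n}" "v \<notin> labels n" for k v
  proof (cases "R k = 0")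
    case False then show ?thesis using good[OF that(1) False] that
      by (auto simp: goodmu_def dists_def)
  qed simp
  have term_sum: "(\<Sum>v\<in>labels n. R k * \<mu> k v) = R k" if "k \<in> {1..n}" for k
  proof (cases "R k = 0")
    case False then show ?thesis using good[OF that(1) False]
      by (auto simp: goodmu_def dists_def sum_distrib_left[symmetric])
  qed simp
  have Dd: "D \<in> dists n"
  proof -
    have "\<forall>v\<in>labels n. 0 \<le> D v"
    proof
      fix v assume v: "v \<in> labels n"
      have "0 \<le> (\<Sum>k\<in>{1..n}. R k * \<mu> k v)" using term_nn[OF _ v] by (intro sum_nonneg) auto
      then show "0 \<le> D v" using r0 unfolding D_def by simp
    qed
    moreover have "\<forall>v. v \<notin> labels n \<longrightarrow> D v = 0" using term_out unfolding D_def z_def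
      by (auto intro!: sum.neutral)
    moreover have "(\<Sum>v\<in>labels n. D v) = 1"
    proof -
      have "(\<Sum>v\<in>labels n. D v) = r0 * (\<Sum>v\<in>labels n. of_bool (v = z)) + (\<Sum>k\<in>{1..n}. \<Sum>v\<in>labels n. R k * \<mu> k v)"
        unfolding D_def by (simp add: sum.distrib sum_distrib_left sum.swap[of _ _ "labels n"])
      also have "(\<Sum>v\<in>labels n. of_bool (v = z) :: real) = 1"
        by (simp add: z_def)
      also have "(\<Sum>k\<in>{1..n}. \<Sum>v\<in>labels n. R k * \<mu> k v) = (\<Sum>k\<in>{1..n}. R k)"
        by (rule sum.cong[OF refl], rule term_sum)
      finally show ?thesis by (simp add: r0_def)
    qed
    ultimately show ?thesis by (simp add: dists_def)
  qed
  have "Mg n D = P"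
  proof (intro ext)
    fix i k
    show "Mg n D i k = P i k"
    proof (cases "i < n \<and> 1 \<le> k \<and> k \<le> n")
      case False then show ?thesis using P0[of i k] by (auto simp: Mg_def)
    next
      case True
      then have i: "i < n" and k: "k \<in> {1..n}" by auto
      have T: "(\<Sum>v\<in>labels n. R k' * \<mu> k' v * of_bool (v i) * of_bool (PP n v = k)) = (if k' = k then P i k else 0)"
        if k': "k' \<in> {1..n}" for k'
      proof (cases "R k' = 0")
        case True
        then show ?thesis using Pnn[OF i k] Ple[OF i k] by auto
      next
        case False
        note g = good[OF k' False]
        show ?thesis
        proof (cases "k' = k")
          case True
          have "(\<Sum>v\<in>labels n. R k' * \<mu> k' v * of_bool (v i) * of_bool (PP n v = k))
             = R k' * (\<Sum>v\<in>labels n. \<mu> k' v * of_bool (v i))"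
            unfolding sum_distrib_left using g True
            by (intro sum.cong) (auto simp: goodmu_def)
          also have "\<dots> = R k' * x k' i" using g i by (simp add: goodmu_def)
          also have "\<dots> = P i k" using True False by (simp add: x_def)
          finally show ?thesis using True by simp
        next
          case False
          then show ?thesis using g by (auto simp: goodmu_def intro!: sum.neutral)
        qed
      qed
      have "w1 n D k i = (\<Sum>v\<in>labels n. (r0 * of_bool (v = z) + (\<Sum>k'\<in>{1..n}. R k' * \<mu> k' v)) * of_bool (v i) * of_bool (PP n v = k))"
        by (simp add: w1_def D_def)
      also have "\<dots> = (\<Sum>v\<in>labels n. (\<Sum>k'\<in>{1..n}. R k' * \<mu> k' v * of_bool (v i) * of_bool (PP n v = k)))"
        by (rule sum.cong[OF refl]) (auto simp: z_def sum_distrib_right)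
      also have "\<dots> = (\<Sum>k'\<in>{1..n}. \<Sum>v\<in>labels n. R k' * \<mu> k' v * of_bool (v i) * of_bool (PP n v = k))"
        by (rule sum.swap)
      also have "\<dots> = (\<Sum>k'\<in>{1..n}. if k' = k then P i k else 0)"
        by (rule sum.cong[OF refl], rule T)
      also have "\<dots> = P i k" using k by simp
      finally show ?thesis using True by (simp add: Mg_def)
    qed
  qed
  then show ?thesis using Dd by blast
qed

lemma Mg_image: "Mg n ` dists n = Delta n"
  using Mg_Delta Mg_surj by blast


lemma le_shift: "(z::ereal) - ereal c \<le> w \<longleftrightarrow> z \<le> w + ereal c"
  by (cases z; cases w) auto
lemma INF_plus_const:
  fixes f :: "'a \<Rightarrow> ereal"
  shows "(INF x\<in>A. f x + ereal c) = (INF x\<in>A. f x) + ereal c"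
proof (rule antisym)
  show "(INF x\<in>A. f x) + ereal c \<le> (INF x\<in>A. f x + ereal c)"
    by (rule INF_greatest, rule add_right_mono, rule INF_lower)
  have "(INF x\<in>A. f x + ereal c) - ereal c \<le> (INF x\<in>A. f x)"
  proof (rule INF_greatest)
    fix x assume "x \<in> A"
    then have "(INF x\<in>A. f x + ereal c) \<le> f x + ereal c" by (rule INF_lower)
    then show "(INF x\<in>A. f x + ereal c) - ereal c \<le> f x" by (simp add: le_shift)
  qed
  then show "(INF x\<in>A. f x + ereal c) \<le> (INF x\<in>A. f x) + ereal c" by (simp add: le_shift)
qed
lemma SUP_plus_const:
  fixes f :: "'a \<Rightarrow> ereal"
  shows "(SUP x\<in>A. f x + ereal c) = (SUP x\<in>A. f x) + ereal c"
proof (cases "A = {}")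
  case True then show ?thesis by (simp add: bot_ereal_def)
next
  case False then show ?thesis by (simp add: SUP_ereal_add_left)
qed


lemma transfer:
  fixes F :: "((nat \<Rightarrow> bool) \<Rightarrow> real) \<Rightarrow> ((nat \<Rightarrow> bool) \<Rightarrow> real) \<Rightarrow> real"
  assumes "\<And>P Q. P \<in> dists n \<Longrightarrow> Q \<in> dists n \<Longrightarrow> F Q P = G (Mg n Q) (Mg n P) + c"
    and "\<And>P. P \<in> dists n \<Longrightarrow> CL P \<longleftrightarrow> CR (Mg n P)"
  shows "(INF Q\<in>dists n. SUP P\<in>{P\<in>dists n. CL P}. ereal (F Q P))
     = (INF Q\<in>Delta n. SUP P\<in>{P\<in>Delta n. CR P}. ereal (G Q P)) + ereal c"
proof -
  have img: "Mg n ` {P\<in>dists n. CL P} = {P\<in>Delta n. CR P}"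
  proof
    show "Mg n ` {P\<in>dists n. CL P} \<subseteq> {P\<in>Delta n. CR P}"
      using Mg_Delta assms(2) by auto
    show "{P\<in>Delta n. CR P} \<subseteq> Mg n ` {P\<in>dists n. CL P}"
    proof
      fix P assume "P \<in> {P\<in>Delta n. CR P}"
      then obtain D where "D \<in> dists n" "Mg n D = P" "CR P" using Mg_surj by blast
      then show "P \<in> Mg n ` {P\<in>dists n. CL P}" using assms(2) by auto
    qed
  qed
  have "(INF Q\<in>dists n. SUP P\<in>{P\<in>dists n. CL P}. ereal (F Q P))
     = (INF Q\<in>dists n. SUP P\<in>{P\<in>dists n. CL P}. ereal (G (Mg n Q) (Mg n P)) + ereal c)"
    using assms(1) by (intro INF_cong[OF refl] SUP_cong[OF refl]) simp
  also have "\<dots> = (INF Q\<in>dists n. (SUP P\<in>{P\<in>dists n. CL P}. ereal (G (Mg n Q) (Mg n P))) + ereal c)"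
    by (rule INF_cong[OF refl], rule SUP_plus_const)
  also have "\<dots> = (INF Q\<in>dists n. (SUP P\<in>{P\<in>Delta n. CR P}. ereal (G (Mg n Q) P)) + ereal c)"
    unfolding img[symmetric] image_image ..
  also have "\<dots> = (INF Q\<in>Delta n. (SUP P\<in>{P\<in>Delta n. CR P}. ereal (G Q P)) + ereal c)"
    unfolding Mg_image[of n, symmetric] image_image ..
  also have "\<dots> = (INF Q\<in>Delta n. SUP P\<in>{P\<in>Delta n. CR P}. ereal (G Q P)) + ereal c"
    by (rule INF_plus_const)
  finally show ?thesis .
qed



lemma qm_eq:
  assumes "s < n"
  shows "(\<Sum>l\<in>{1..n}. Mg n Q s l) = (\<Sum>v\<in>labels n. Q v * of_bool (v s))"
proof -
  have "(\<Sum>l\<in>{1..n}. Mg n Q s l) = (\<Sum>l\<in>{1..n}. w1 n Q l s)"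
    using assms by (intro sum.cong) (auto simp: Mg_def)
  also have "\<dots> = (\<Sum>l\<in>{0..n}. w1 n Q l s)"
  proof -
    have "{0..n} = insert 0 {1..n}" by auto
    then show ?thesis using w1_zero[OF assms] by simp
  qed
  also have "\<dots> = (\<Sum>l\<in>{0..n}. \<Sum>v\<in>labels n. of_bool (PP n v = l) * (Q v * of_bool (v s)))"
    unfolding w1_def by (simp add: mult_ac)
  also have "\<dots> = (\<Sum>v\<in>labels n. Q v * of_bool (v s))"
    using split_PP[of "\<lambda>v k. Q v * of_bool (v s)" n] by simp
  finally show ?thesis .
qed

lemma theta_eq:
  assumes Q: "Q \<in> dists n"
  shows "(\<Sum>yc\<in>labels n. Q yc * (\<Sum>r<m. \<theta> r * (\<Sum>i<n. Psi r i * (of_bool (yc i) - of_bool (y i)))))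
    = (\<Sum>s<n. (\<Sum>l\<in>{1..n}. Mg n Q s l) * (\<Sum>r<m. Psi r s * \<theta> r)) - (\<Sum>s<n. of_bool (y s) * (\<Sum>r<m. Psi r s * \<theta> r))"
proof -
  have sQ: "(\<Sum>v\<in>labels n. Q v) = 1" using Q by (simp add: dists_def)
  have "(\<Sum>yc\<in>labels n. Q yc * (\<Sum>r<m. \<theta> r * (\<Sum>i<n. Psi r i * (of_bool (yc i) - of_bool (y i)))))
     = (\<Sum>yc\<in>labels n. \<Sum>r<m. \<Sum>i<n. Q yc * (\<theta> r * Psi r i * (of_bool (yc i) - of_bool (y i))))"
    by (simp add: sum_distrib_left mult_ac)
  also have "\<dots> = (\<Sum>r<m. \<Sum>yc\<in>labels n. \<Sum>i<n. Q yc * (\<theta> r * Psi r i * (of_bool (yc i) - of_bool (y i))))"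
    by (rule sum.swap)
  also have "\<dots> = (\<Sum>r<m. \<Sum>i<n. \<Sum>yc\<in>labels n. Q yc * (\<theta> r * Psi r i * (of_bool (yc i) - of_bool (y i))))"
    by (rule sum.cong[OF refl], rule sum.swap)
  also have "\<dots> = (\<Sum>r<m. \<Sum>i<n. \<theta> r * Psi r i * ((\<Sum>yc\<in>labels n. Q yc * of_bool (yc i)) - of_bool (y i)))"
  proof (intro sum.cong refl)
    fix r i
    have "(\<Sum>yc\<in>labels n. Q yc * (\<theta> r * Psi r i * (of_bool (yc i) - of_bool (y i))))
      = \<theta> r * Psi r i * ((\<Sum>yc\<in>labels n. Q yc * of_bool (yc i)) - (\<Sum>yc\<in>labels n. Q yc) * of_bool (y i))"
      by (simp del: sum_mult_of_bool_eq sum_of_bool_mult_eq add: sum_distrib_left sum_distrib_right sum_subtractf algebra_simps)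
    then show "(\<Sum>yc\<in>labels n. Q yc * (\<theta> r * Psi r i * (of_bool (yc i) - of_bool (y i))))
      = \<theta> r * Psi r i * ((\<Sum>yc\<in>labels n. Q yc * of_bool (yc i)) - of_bool (y i))" using sQ by simp
  qed
  also have "\<dots> = (\<Sum>i<n. \<Sum>r<m. \<theta> r * Psi r i * ((\<Sum>yc\<in>labels n. Q yc * of_bool (yc i)) - of_bool (y i)))"
    by (rule sum.swap)
  also have "\<dots> = (\<Sum>i<n. ((\<Sum>l\<in>{1..n}. Mg n Q i l) - of_bool (y i)) * (\<Sum>r<m. Psi r i * \<theta> r))"
  proof (intro sum.cong refl)
    fix i assume "i \<in> {..<n}"
    then have q: "(\<Sum>yc\<in>labels n. Q yc * of_bool (yc i)) = (\<Sum>l\<in>{1..n}. Mg n Q i l)"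
      by (intro qm_eq[symmetric]) simp
    have aux: "(\<Sum>r<m. \<theta> r * Psi r i * Z) = Z * (\<Sum>r<m. Psi r i * \<theta> r)" for Z :: real
      by (simp add: sum_distrib_left mult_ac)
    show "(\<Sum>r<m. \<theta> r * Psi r i * ((\<Sum>yc\<in>labels n. Q yc * of_bool (yc i)) - of_bool (y i)))
      = ((\<Sum>l\<in>{1..n}. Mg n Q i l) - of_bool (y i)) * (\<Sum>r<m. Psi r i * \<theta> r)"
      unfolding q by (rule aux)
  qed
  also have "\<dots> = (\<Sum>s<n. (\<Sum>l\<in>{1..n}. Mg n Q s l) * (\<Sum>r<m. Psi r s * \<theta> r)) - (\<Sum>s<n. of_bool (y s) * (\<Sum>r<m. Psi r s * \<theta> r))"
    by (simp add: sum_subtractf left_diff_distrib)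
  finally show ?thesis .
qed

lemma constr_eq:
  assumes P: "P \<in> dists n" and ls: "lstar = (\<Sum>i<n. of_bool (y i))"
  shows "(\<Sum>v\<in>labels n. P v * metric a b f g J n i v y) =
    (\<Sum>k\<in>{0..n}. \<Sum>j<J i. (1 / g i j k lstar) *
       (a i j * (\<Sum>s<n. p1 (Mg n P) k s * of_bool (y s))
        + b i j * (\<Sum>s<n. p0 n (Mg n P) k s * (1 - of_bool (y s)))
        + f i j k lstar * rr n (Mg n P) k))"
proof -
  have "AP n y = lstar" using ls by (simp add: AP_def)
  then show ?thesis using P
    by (simp del: sum_mult_of_bool_eq sum_of_bool_mult_eq add: metric_lin p1_Mg p0_Mg rr_Mg)
qed

lemma obj_eq:
  assumes P: "P \<in> dists n" and Q: "Q \<in> dists n"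
  shows "(\<Sum>yh\<in>labels n. \<Sum>yc\<in>labels n. P yh * Q yc *
             (metric a b f g J n 0 yh yc
              - (\<Sum>r<m. \<theta> r * (\<Sum>i<n. Psi r i * (of_bool (yc i) - of_bool (y i))))))
   = ((\<Sum>k\<in>{0..n}. \<Sum>l\<in>{0..n}. \<Sum>j<J 0. (1 / g 0 j k l) *
                    (a 0 j * (\<Sum>s<n. p1 (Mg n P) k s * p1 (Mg n Q) l s)
                     + b 0 j * (\<Sum>s<n. p0 n (Mg n P) k s * p0 n (Mg n Q) l s)
                     + f 0 j k l * rr n (Mg n P) k * rr n (Mg n Q) l))
                 - (\<Sum>s<n. (\<Sum>l\<in>{1..n}. Mg n Q s l) * (\<Sum>r<m. Psi r s * \<theta> r)))
      + (\<Sum>s<n. of_bool (y s) * (\<Sum>r<m. Psi r s * \<theta> r))"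
proof -
  define Th where "Th yc = (\<Sum>r<m. \<theta> r * (\<Sum>i<n. Psi r i * (of_bool (yc i) - of_bool (y i))))" for yc
  have sP: "(\<Sum>v\<in>labels n. P v) = 1" using P by (simp add: dists_def)
  have "(\<Sum>yh\<in>labels n. \<Sum>yc\<in>labels n. P yh * Q yc * (metric a b f g J n 0 yh yc - Th yc))
     = (\<Sum>yh\<in>labels n. \<Sum>yc\<in>labels n. P yh * Q yc * metric a b f g J n 0 yh yc)
       - (\<Sum>yh\<in>labels n. P yh * (\<Sum>yc\<in>labels n. Q yc * Th yc))"
    by (simp add: right_diff_distrib sum_subtractf sum_distrib_left mult_ac)
  also have "(\<Sum>yh\<in>labels n. P yh * (\<Sum>yc\<in>labels n. Q yc * Th yc)) = (\<Sum>yc\<in>labels n. Q yc * Th yc)"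
    using sP by (simp add: sum_distrib_right[symmetric])
  also have "(\<Sum>yc\<in>labels n. Q yc * Th yc) = (\<Sum>s<n. (\<Sum>l\<in>{1..n}. Mg n Q s l) * (\<Sum>r<m. Psi r s * \<theta> r)) - (\<Sum>s<n. of_bool (y s) * (\<Sum>r<m. Psi r s * \<theta> r))"
    unfolding Th_def by (rule theta_eq[OF Q])
  also have "(\<Sum>yh\<in>labels n. \<Sum>yc\<in>labels n. P yh * Q yc * metric a b f g J n 0 yh yc)
    = (\<Sum>k\<in>{0..n}. \<Sum>l\<in>{0..n}. \<Sum>j<J 0. (1 / g 0 j k l) *
                    (a 0 j * (\<Sum>s<n. p1 (Mg n P) k s * p1 (Mg n Q) l s)
                     + b 0 j * (\<Sum>s<n. p0 n (Mg n P) k s * p0 n (Mg n Q) l s)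
                     + f 0 j k l * rr n (Mg n P) k * rr n (Mg n Q) l))"
    unfolding metric_bilin using P Q
    by (simp del: sum_mult_of_bool_eq sum_of_bool_mult_eq add: p1_Mg p0_Mg rr_Mg)
  finally show ?thesis unfolding Th_def by simp
qed


theorem theorem5:
  fixes n m t :: nat
    and y :: "nat \<Rightarrow> bool" and lstar :: nat
    and Psi :: "nat \<Rightarrow> nat \<Rightarrow> real"
    and tau :: "nat \<Rightarrow> real"
    and J :: "nat \<Rightarrow> nat"
    and a b :: "nat \<Rightarrow> nat \<Rightarrow> real"
    and f g :: "nat \<Rightarrow> nat \<Rightarrow> nat \<Rightarrow> nat \<Rightarrow> real"
  assumes "1 \<le> n" and "1 \<le> m" and "1 \<le> t"
    and "y \<in> labels n"
    and "lstar = (\<Sum>i<n. of_bool (y i))"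
    and "\<And>i j k l. i \<le> t \<Longrightarrow> j < J i \<Longrightarrow> k \<le> n \<Longrightarrow> l \<le> n \<Longrightarrow> g i j k l \<noteq> 0"
  shows
  "(SUP \<theta>\<in>{\<theta> :: nat \<Rightarrow> real. \<forall>r. m \<le> r \<longrightarrow> \<theta> r = 0}.
      INF Q\<in>dists n.
        SUP P\<in>{P \<in> dists n. \<forall>i\<in>{1..t}.
                   (\<Sum>v\<in>labels n. P v * metric a b f g J n i v y) \<ge> tau i}.
          ereal (\<Sum>yh\<in>labels n. \<Sum>yc\<in>labels n. P yh * Q yc *
             (metric a b f g J n 0 yh yc
              - (\<Sum>r<m. \<theta> r * (\<Sum>i<n. Psi r i * (of_bool (yc i) - of_bool (y i)))))))
   =
   (SUP \<theta>\<in>{\<theta> :: nat \<Rightarrow> real. \<forall>r. m \<le> r \<longrightarrow> \<theta> r = 0}.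
      (INF Q\<in>Delta n.
        SUP P\<in>{P \<in> Delta n. \<forall>i\<in>{1..t}.
            (\<Sum>k\<in>{0..n}. \<Sum>j<J i. (1 / g i j k lstar) *
               (a i j * (\<Sum>s<n. p1 P k s * of_bool (y s))
                + b i j * (\<Sum>s<n. p0 n P k s * (1 - of_bool (y s)))
                + f i j k lstar * rr n P k)) \<ge> tau i}.
          ereal ((\<Sum>k\<in>{0..n}. \<Sum>l\<in>{0..n}. \<Sum>j<J 0. (1 / g 0 j k l) *
                    (a 0 j * (\<Sum>s<n. p1 P k s * p1 Q l s)
                     + b 0 j * (\<Sum>s<n. p0 n P k s * p0 n Q l s)
                     + f 0 j k l * rr n P k * rr n Q l))
                 - (\<Sum>s<n. (\<Sum>l\<in>{1..n}. Q s l) * (\<Sum>r<m. Psi r s * \<theta> r))))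
      + ereal (\<Sum>s<n. of_bool (y s) * (\<Sum>r<m. Psi r s * \<theta> r)))"
  proof (rule SUP_cong[OF refl])
  fix \<theta> :: "nat \<Rightarrow> real"
  show "(INF Q\<in>dists n.
        SUP P\<in>{P \<in> dists n. \<forall>i\<in>{1..t}.
                   (\<Sum>v\<in>labels n. P v * metric a b f g J n i v y) \<ge> tau i}.
          ereal (\<Sum>yh\<in>labels n. \<Sum>yc\<in>labels n. P yh * Q yc *
             (metric a b f g J n 0 yh yc
              - (\<Sum>r<m. \<theta> r * (\<Sum>i<n. Psi r i * (of_bool (yc i) - of_bool (y i)))))))
   =
      (INF Q\<in>Delta n.
        SUP P\<in>{P \<in> Delta n. \<forall>i\<in>{1..t}.
            (\<Sum>k\<in>{0..n}. \<Sum>j<J i. (1 / g i j k lstar) *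
               (a i j * (\<Sum>s<n. p1 P k s * of_bool (y s))
                + b i j * (\<Sum>s<n. p0 n P k s * (1 - of_bool (y s)))
                + f i j k lstar * rr n P k)) \<ge> tau i}.
          ereal ((\<Sum>k\<in>{0..n}. \<Sum>l\<in>{0..n}. \<Sum>j<J 0. (1 / g 0 j k l) *
                    (a 0 j * (\<Sum>s<n. p1 P k s * p1 Q l s)
                     + b 0 j * (\<Sum>s<n. p0 n P k s * p0 n Q l s)
                     + f 0 j k l * rr n P k * rr n Q l))
                 - (\<Sum>s<n. (\<Sum>l\<in>{1..n}. Q s l) * (\<Sum>r<m. Psi r s * \<theta> r))))
      + ereal (\<Sum>s<n. of_bool (y s) * (\<Sum>r<m. Psi r s * \<theta> r))"
  proof (rule transfer)
    fix P Q assume "P \<in> dists n" "Q \<in> dists n"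
    then show "(\<Sum>yh\<in>labels n. \<Sum>yc\<in>labels n. P yh * Q yc *
             (metric a b f g J n 0 yh yc
              - (\<Sum>r<m. \<theta> r * (\<Sum>i<n. Psi r i * (of_bool (yc i) - of_bool (y i))))))
   = ((\<Sum>k\<in>{0..n}. \<Sum>l\<in>{0..n}. \<Sum>j<J 0. (1 / g 0 j k l) *
                    (a 0 j * (\<Sum>s<n. p1 (Mg n P) k s * p1 (Mg n Q) l s)
                     + b 0 j * (\<Sum>s<n. p0 n (Mg n P) k s * p0 n (Mg n Q) l s)
                     + f 0 j k l * rr n (Mg n P) k * rr n (Mg n Q) l))
                 - (\<Sum>s<n. (\<Sum>l\<in>{1..n}. Mg n Q s l) * (\<Sum>r<m. Psi r s * \<theta> r)))
      + (\<Sum>s<n. of_bool (y s) * (\<Sum>r<m. Psi r s * \<theta> r))"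
      by (rule obj_eq)
  next
    fix P assume P: "P \<in> dists n"
    show "(\<forall>i\<in>{1..t}. (\<Sum>v\<in>labels n. P v * metric a b f g J n i v y) \<ge> tau i) \<longleftrightarrow>
      (\<forall>i\<in>{1..t}.
            (\<Sum>k\<in>{0..n}. \<Sum>j<J i. (1 / g i j k lstar) *
               (a i j * (\<Sum>s<n. p1 (Mg n P) k s * of_bool (y s))
                + b i j * (\<Sum>s<n. p0 n (Mg n P) k s * (1 - of_bool (y s)))
                + f i j k lstar * rr n (Mg n P) k)) \<ge> tau i)"
      by (simp only: constr_eq[OF P assms(5)])
  qed
qed

end
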